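(* Let $\mathcal A$ be a maximal commutative subalgebra of $\mathcal M_d(\mathbb C)$. Suppose $\mathcal B$ is a commutative algebra of block Toeplitz matrices with entries in $\mathcal A$ (i.e. $\mathcal B\subset\mathcal T_{n,d}[\mathcal A]$), and $D$ is a block Toeplitz cyclic diagonal with entries in $\mathcal A$ such that $D\intercal\mathcal B$. Then the algebra $\mathcal B_1$ generated by $\mathcal B$ and $D$ consists of block Toeplitz matrices.
   Context: A block Toeplitz matrix is an $n\times n$ block matrix $A=(A_{i-j})_{i,j=0}^{n-1}$ with $A_m\in\mathcal M_d(\mathbb C)$; $\mathcal T_{n,d}[\mathcal A]$ is the set of block Toeplitz matrices all of whose entries $A_m$ lie in $\mathcal A$. A cyclic diagonal of order $k$ ($0\le k\le n-1$) is an $n\times n$ block matrix $T$ with $T_{i,j}=0$ unless $i-j=k$ or $i-j=k-n$. For block Toeplitz $A,B$, write $A\intercal B$ if $AB$ is block Toeplitz, and $A\intercal\mathcal S$ if $A\intercal B$ for all $B\in\mathcal S$. *)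

theory Defs
  imports Complex_Main "Jordan_Normal_Form.Matrix"
begin

text \<open>A block matrix with n x n blocks of size d x d is represented as an (n*d) x (n*d)
  complex matrix. Block (i,j) is the d x d submatrix in block-row i, block-column j.\<close>

definition blk :: "nat \<Rightarrow> complex mat \<Rightarrow> nat \<Rightarrow> nat \<Rightarrow> complex mat" where
  "blk d M i j = mat d d (\<lambda>(a, b). M $$ (i * d + a, j * d + b))"

definition is_subalg :: "nat \<Rightarrow> complex mat set \<Rightarrow> bool" where
  "is_subalg d S \<longleftrightarrow> S \<subseteq> carrier_mat d d \<and> 0\<^sub>m d d \<in> S \<and>
     (\<forall>X\<in>S. \<forall>Y\<in>S. X + Y \<in> S \<and> X * Y \<in> S) \<and> (\<forall>c. \<forall>X\<in>S. c \<cdot>\<^sub>m X \<in> S)"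

definition is_commutative :: "complex mat set \<Rightarrow> bool" where
  "is_commutative S \<longleftrightarrow> (\<forall>X\<in>S. \<forall>Y\<in>S. X * Y = Y * X)"

definition max_comm_subalg :: "nat \<Rightarrow> complex mat set \<Rightarrow> bool" where
  "max_comm_subalg d S \<longleftrightarrow> is_subalg d S \<and> is_commutative S \<and>
     (\<forall>T. is_subalg d T \<and> is_commutative T \<and> S \<subseteq> T \<longrightarrow> T = S)"

definition block_toeplitz :: "nat \<Rightarrow> nat \<Rightarrow> complex mat \<Rightarrow> bool" where
  "block_toeplitz n d M \<longleftrightarrow> M \<in> carrier_mat (n * d) (n * d) \<and>
     (\<forall>i j k l. i < n \<longrightarrow> j < n \<longrightarrow> k < n \<longrightarrow> l < n \<longrightarrow>
        int i - int j = int k - int l \<longrightarrow> blk d M i j = blk d M k l)"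

definition toeplitz_in :: "nat \<Rightarrow> nat \<Rightarrow> complex mat set \<Rightarrow> complex mat set" where
  "toeplitz_in n d A = {M. block_toeplitz n d M \<and> (\<forall>i<n. \<forall>j<n. blk d M i j \<in> A)}"

definition cyclic_diag :: "nat \<Rightarrow> nat \<Rightarrow> nat \<Rightarrow> complex mat \<Rightarrow> bool" where
  "cyclic_diag n d k T \<longleftrightarrow> k < n \<and> T \<in> carrier_mat (n * d) (n * d) \<and>
     (\<forall>i<n. \<forall>j<n. int i - int j \<noteq> int k \<and> int i - int j \<noteq> int k - int n
        \<longrightarrow> blk d T i j = 0\<^sub>m d d)"

definition toep_rel :: "nat \<Rightarrow> nat \<Rightarrow> complex mat \<Rightarrow> complex mat \<Rightarrow> bool" where
  "toep_rel n d X Y \<longleftrightarrow> block_toeplitz n d (X * Y)"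

definition gen_alg :: "nat \<Rightarrow> complex mat set \<Rightarrow> complex mat set" where
  "gen_alg m G = \<Inter>{S. is_subalg m S \<and> G \<subseteq> S}"

end

theory Submission
  imports Defs
begin


lemma blk_dim[simp]: "dim_row (blk d M i j) = d" "dim_col (blk d M i j) = d"
  by (auto simp: blk_def)

lemma blk_carrier[simp]: "blk d M i j \<in> carrier_mat d d"
  by (auto simp: blk_def)

lemma blk_index[simp]: "a < d \<Longrightarrow> b < d \<Longrightarrow> blk d M i j $$ (a,b) = M $$ (i*d+a, j*d+b)"
  by (auto simp: blk_def)

lemma idx_lt: assumes "i < n" "a < (d::nat)" shows "i*d+a < n*d"
proof -
  have "i*d + a < i*d + d" using assms by simp
  also have "\<dots> = (i+1)*d" by simp
  also have "\<dots> \<le> n*d" using assms by (intro mult_right_mono) auto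
  finally show ?thesis .
qed

lemma blk_eqI:
  assumes "M \<in> carrier_mat (n*d) (n*d)" "N \<in> carrier_mat (n*d) (n*d)"
    and "\<And>i j. i < n \<Longrightarrow> j < n \<Longrightarrow> blk d M i j = blk d N i j"
  shows "M = N"
proof (rule eq_matI)
  fix a b assume a: "a < dim_row N" and b: "b < dim_col N"
  hence a': "a < n*d" and b': "b < n*d" using assms by auto
  hence dpos: "d > 0" by (cases d) auto
  have ad: "a div d < n" "b div d < n" using a' b' dpos
    by (simp_all add: less_mult_imp_div_less)
  have "blk d M (a div d) (b div d) $$ (a mod d, b mod d) = blk d N (a div d) (b div d) $$ (a mod d, b mod d)"
    using assms(3)[OF ad] by simp
  thus "M $$ (a,b) = N $$ (a,b)" using dpos by (simp add: mult.commute)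
qed (use assms in auto)

lemma blk_add[simp]: "M \<in> carrier_mat (n*d) (n*d) \<Longrightarrow> N \<in> carrier_mat (n*d) (n*d) \<Longrightarrow> i < n \<Longrightarrow> j < n
  \<Longrightarrow> blk d (M + N) i j = blk d M i j + blk d N i j"
  by (rule eq_matI) (auto simp: idx_lt)

lemma blk_smult[simp]: "M \<in> carrier_mat (n*d) (n*d) \<Longrightarrow> i < n \<Longrightarrow> j < n
  \<Longrightarrow> blk d (c \<cdot>\<^sub>m M) i j = c \<cdot>\<^sub>m blk d M i j"
  by (rule eq_matI) (auto simp: idx_lt)

lemma sum_blocks:
  fixes l0 n d :: nat and f :: "nat \<Rightarrow> 'a::comm_monoid_add"
  assumes l0: "l0 < n" and z: "\<And>c. c < n*d \<Longrightarrow> c div d \<noteq> l0 \<Longrightarrow> f c = 0"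
  shows "(\<Sum>c\<in>{0..<n*d}. f c) = (\<Sum>e\<in>{0..<d}. f (l0*d+e))"
proof -
  have le: "l0*d + d \<le> n*d" using l0
  proof -
    have "Suc l0 \<le> n" using l0 by simp
    hence "Suc l0 * d \<le> n * d" by (rule mult_le_mono1)
    thus ?thesis by simp
  qed
  have sub: "{l0*d..<l0*d+d} \<subseteq> {0..<n*d}" using le by auto
  have "(\<Sum>c\<in>{0..<n*d}. f c) = (\<Sum>c\<in>{l0*d..<l0*d+d}. f c)"
  proof (rule sum.mono_neutral_right[OF _ sub])
    show "\<forall>c\<in>{0..<n * d} - {l0 * d..<l0 * d + d}. f c = 0"
    proof
      fix c assume c: "c \<in> {0..<n * d} - {l0 * d..<l0 * d + d}"
      have "c div d \<noteq> l0"
      proof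
        assume "c div d = l0"
        hence "c = l0*d + c mod d" by (metis div_mult_mod_eq)
        moreover have "c mod d < d" using c by (cases d) auto
        ultimately show False using c by auto
      qed
      thus "f c = 0" using z c by auto
    qed
  qed simp
  also have "\<dots> = (\<Sum>e\<in>{0..<d}. f (l0*d+e))"
    by (rule sum.reindex_bij_witness[of _ "\<lambda>e. l0*d+e" "\<lambda>c. c - l0*d"]) auto
  finally show ?thesis .
qed

lemma blk_mult_row:
  assumes M: "M \<in> carrier_mat (n*d) (n*d)" and N: "N \<in> carrier_mat (n*d) (n*d)"
    and ij: "i < n" "j < n" and l0: "l0 < n"
    and z: "\<And>l. l < n \<Longrightarrow> l \<noteq> l0 \<Longrightarrow> blk d M i l = 0\<^sub>m d d"
  shows "blk d (M*N) i j = blk d M i l0 * blk d N l0 j"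
proof (rule eq_matI)
  fix a b assume a: "a < dim_row (blk d M i l0 * blk d N l0 j)" and b: "b < dim_col (blk d M i l0 * blk d N l0 j)"
  hence a: "a < d" and b: "b < d" by auto
  have L: "blk d (M*N) i j $$ (a,b) = (\<Sum>c\<in>{0..<n*d}. M $$ (i*d+a, c) * N $$ (c, j*d+b))"
    using a b M N ij by (simp add: idx_lt scalar_prod_def)
  also have "\<dots> = (\<Sum>e\<in>{0..<d}. M $$ (i*d+a, l0*d+e) * N $$ (l0*d+e, j*d+b))"
  proof (rule sum_blocks[OF l0])
    fix c assume c: "c < n*d" "c div d \<noteq> l0"
    hence dpos: "d > 0" by (cases d) auto
    have cd: "c div d < n" using c dpos by (simp add: less_mult_imp_div_less)
    have "blk d M i (c div d) $$ (a, c mod d) = 0" using z[OF cd c(2)] a dpos by simp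
    hence "M $$ (i*d+a, c) = 0" using a dpos by (simp add: mult.commute)
    thus "M $$ (i*d+a, c) * N $$ (c, j*d+b) = 0" by simp
  qed
  also have "\<dots> = (blk d M i l0 * blk d N l0 j) $$ (a,b)"
    using a b by (simp add: scalar_prod_def)
  finally show "blk d (M*N) i j $$ (a,b) = (blk d M i l0 * blk d N l0 j) $$ (a,b)" .
qed auto

lemma blk_mult_col:
  assumes M: "M \<in> carrier_mat (n*d) (n*d)" and N: "N \<in> carrier_mat (n*d) (n*d)"
    and ij: "i < n" "j < n" and l0: "l0 < n"
    and z: "\<And>l. l < n \<Longrightarrow> l \<noteq> l0 \<Longrightarrow> blk d N l j = 0\<^sub>m d d"
  shows "blk d (M*N) i j = blk d M i l0 * blk d N l0 j"
proof (rule eq_matI)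
  fix a b assume a: "a < dim_row (blk d M i l0 * blk d N l0 j)" and b: "b < dim_col (blk d M i l0 * blk d N l0 j)"
  hence a: "a < d" and b: "b < d" by auto
  have L: "blk d (M*N) i j $$ (a,b) = (\<Sum>c\<in>{0..<n*d}. M $$ (i*d+a, c) * N $$ (c, j*d+b))"
    using a b M N ij by (simp add: idx_lt scalar_prod_def)
  also have "\<dots> = (\<Sum>e\<in>{0..<d}. M $$ (i*d+a, l0*d+e) * N $$ (l0*d+e, j*d+b))"
  proof (rule sum_blocks[OF l0])
    fix c assume c: "c < n*d" "c div d \<noteq> l0"
    hence dpos: "d > 0" by (cases d) auto
    have cd: "c div d < n" using c dpos by (simp add: less_mult_imp_div_less)
    have "blk d N (c div d) j $$ (c mod d, b) = 0" using z[OF cd c(2)] b dpos by simp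
    hence "N $$ (c, j*d+b) = 0" using b dpos by (simp add: mult.commute)
    thus "M $$ (i*d+a, c) * N $$ (c, j*d+b) = 0" by simp
  qed
  also have "\<dots> = (blk d M i l0 * blk d N l0 j) $$ (a,b)"
    using a b by (simp add: scalar_prod_def)
  finally show "blk d (M*N) i j $$ (a,b) = (blk d M i l0 * blk d N l0 j) $$ (a,b)" .
qed auto



definition tz :: "nat \<Rightarrow> complex mat \<Rightarrow> int \<Rightarrow> complex mat" where
  "tz d Y m = (if 0 \<le> m then blk d Y (nat m) 0 else blk d Y 0 (nat (-m)))"

lemma toepD:
  assumes "block_toeplitz n d Y" "i < n" "j < n" "k < n" "l < n" "int i - int j = int k - int l"
  shows "blk d Y i j = blk d Y k l"
  using assms unfolding block_toeplitz_def by blast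

lemma tz_blk:
  assumes "block_toeplitz n d Y" "i < n" "j < n"
  shows "blk d Y i j = tz d Y (int i - int j)"
proof (cases "j \<le> i")
  case True
  have "blk d Y i j = blk d Y (i-j) 0"
    by (rule toepD[OF assms(1)]) (use assms True in auto)
  thus ?thesis using True by (simp add: tz_def nat_diff_distrib of_nat_diff)
next
  case False
  have "blk d Y i j = blk d Y 0 (j-i)"
    by (rule toepD[OF assms(1)]) (use assms False in auto)
  thus ?thesis using False by (simp add: tz_def nat_diff_distrib)
qed

lemma tz_in:
  assumes "Y \<in> toeplitz_in n d A" "- int n < m" "m < int n"
  shows "tz d Y m \<in> A"
  using assms unfolding toeplitz_in_def tz_def by (auto simp: nat_less_iff)

locale tzs =
  fixes n d k :: nat and A :: "complex mat set" and D :: "complex mat"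
  assumes A_sub: "is_subalg d A" and A_comm: "is_commutative A"
    and D_in: "D \<in> toeplitz_in n d A" and D_cyc: "cyclic_diag n d k D"
begin

definition "al = blk d D k 0"
definition "be = blk d D 0 (n-k)"

definition cnd :: "complex mat \<Rightarrow> bool" where
  "cnd Y \<longleftrightarrow> Y \<in> toeplitz_in n d A \<and>
     (0 < k \<longrightarrow> (\<forall>r. - int n < r \<and> r < 0 \<longrightarrow> al * tz d Y r = be * tz d Y (r + int n)))"

definition V :: "complex mat \<Rightarrow> int \<Rightarrow> complex mat" where
  "V Y m = (if - int n < m then al * tz d Y m else be * tz d Y (m + int n))"

lemma kn: "k < n" using D_cyc by (simp add: cyclic_diag_def)
lemma npos: "0 < n" using kn by simp
lemma D_car: "D \<in> carrier_mat (n*d) (n*d)" using D_cyc by (simp add: cyclic_diag_def)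

lemma A_car: "X \<in> A \<Longrightarrow> X \<in> carrier_mat d d" using A_sub by (auto simp: is_subalg_def)
lemma A_mult: "X \<in> A \<Longrightarrow> Y \<in> A \<Longrightarrow> X * Y \<in> A" using A_sub by (auto simp: is_subalg_def)
lemma A_add: "X \<in> A \<Longrightarrow> Y \<in> A \<Longrightarrow> X + Y \<in> A" using A_sub by (auto simp: is_subalg_def)
lemma A_smult: "X \<in> A \<Longrightarrow> c \<cdot>\<^sub>m X \<in> A" using A_sub by (auto simp: is_subalg_def)
lemma A_com: "X \<in> A \<Longrightarrow> Y \<in> A \<Longrightarrow> X * Y = Y * X" using A_comm by (auto simp: is_commutative_def)

lemma al_A: "al \<in> A" using D_in kn npos by (auto simp: toeplitz_in_def al_def)
lemma be_A: "0 < k \<Longrightarrow> be \<in> A" using D_in kn npos by (auto simp: toeplitz_in_def be_def)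

lemma D_toep: "block_toeplitz n d D" using D_in by (simp add: toeplitz_in_def)

lemma D_blk:
  assumes "i < n" "l < n"
  shows "blk d D i l = (if int i - int l = int k then al else if int i - int l = int k - int n then be else 0\<^sub>m d d)"
proof -
  have c1: "int i - int l = int k \<Longrightarrow> blk d D i l = al"
    unfolding al_def by (rule toepD[OF D_toep]) (use assms kn npos in auto)
  have c2: "int i - int l = int k - int n \<Longrightarrow> blk d D i l = be"
  proof -
    assume h: "int i - int l = int k - int n"
    hence "0 < k" using assms by linarith
    hence "n - k < n" using kn by simp
    thus ?thesis unfolding be_def by (rule toepD[OF D_toep assms npos]) (use h kn in auto)
  qed
  have c3: "int i - int l \<noteq> int k \<Longrightarrow> int i - int l \<noteq> int k - int n \<Longrightarrow> blk d D i l = 0\<^sub>m d d"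
    using D_cyc assms unfolding cyclic_diag_def by blast
  show ?thesis using c1 c2 c3 by auto
qed

lemma DY_blk:
  assumes Y: "Y \<in> carrier_mat (n*d) (n*d)" and ij: "i < n" "j < n"
  shows "blk d (D*Y) i j = (if k \<le> i then al * blk d Y (i-k) j else be * blk d Y (i+n-k) j)"
proof -
  define l0 where "l0 = (if k \<le> i then i - k else i + n - k)"
  have l0: "l0 < n" using ij kn by (auto simp: l0_def)
  have z: "\<And>l. l < n \<Longrightarrow> l \<noteq> l0 \<Longrightarrow> blk d D i l = 0\<^sub>m d d"
  proof -
    fix l assume l: "l < n" "l \<noteq> l0"
    have "int i - int l \<noteq> int k" "int i - int l \<noteq> int k - int n"
      using l ij kn by (auto simp: l0_def split: if_splits)
    thus "blk d D i l = 0\<^sub>m d d" using D_blk[OF ij(1) l(1)] by simp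
  qed
  have "blk d (D*Y) i j = blk d D i l0 * blk d Y l0 j"
    by (rule blk_mult_row[OF D_car Y ij l0 z])
  also have "blk d D i l0 = (if k \<le> i then al else be)"
    using D_blk[OF ij(1) l0] ij kn by (auto simp: l0_def)
  finally show ?thesis by (simp add: l0_def)
qed

lemma YD_blk:
  assumes Y: "Y \<in> carrier_mat (n*d) (n*d)" and ij: "i < n" "j < n"
  shows "blk d (Y*D) i j = (if j + k < n then blk d Y i (j+k) * al else blk d Y i (j+k-n) * be)"
proof -
  define l0 where "l0 = (if j + k < n then j + k else j + k - n)"
  have l0: "l0 < n" using ij kn by (auto simp: l0_def)
  have z: "\<And>l. l < n \<Longrightarrow> l \<noteq> l0 \<Longrightarrow> blk d D l j = 0\<^sub>m d d"
  proof -
    fix l assume l: "l < n" "l \<noteq> l0"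
    have "int l - int j \<noteq> int k" "int l - int j \<noteq> int k - int n"
      using l ij kn by (auto simp: l0_def split: if_splits)
    thus "blk d D l j = 0\<^sub>m d d" using D_blk[OF l(1) ij(2)] by simp
  qed
  have "blk d (Y*D) i j = blk d Y i l0 * blk d D l0 j"
    by (rule blk_mult_col[OF Y D_car ij l0 z])
  also have "blk d D l0 j = (if j + k < n then al else be)"
    using D_blk[OF l0 ij(2)] ij kn by (auto simp: l0_def)
  finally show ?thesis by (simp add: l0_def)
qed


lemma cnd_car: "cnd Y \<Longrightarrow> Y \<in> carrier_mat (n*d) (n*d)"
  by (simp add: cnd_def toeplitz_in_def block_toeplitz_def)

lemma cnd_toep: "cnd Y \<Longrightarrow> block_toeplitz n d Y"
  by (simp add: cnd_def toeplitz_in_def)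

lemma cnd_tz: "cnd Y \<Longrightarrow> - int n < m \<Longrightarrow> m < int n \<Longrightarrow> tz d Y m \<in> A"
  by (rule tz_in) (auto simp: cnd_def)

lemma cnd_cond: "cnd Y \<Longrightarrow> 0 < k \<Longrightarrow> - int n < r \<Longrightarrow> r < 0 \<Longrightarrow> al * tz d Y r = be * tz d Y (r + int n)"
  by (simp add: cnd_def)

lemma key:
  assumes Y: "cnd Y" and ij: "i < n" "j < n"
  shows "blk d (D*Y) i j = V Y (int i - int j - int k)" "blk d (Y*D) i j = V Y (int i - int j - int k)"
proof -
  note Yc = cnd_car[OF Y] and Yt = cnd_toep[OF Y]
  define m where "m = int i - int j - int k"
  show "blk d (D*Y) i j = V Y (int i - int j - int k)"
  proof (cases "k \<le> i")
    case True
    have "blk d (D*Y) i j = al * blk d Y (i-k) j" using DY_blk[OF Yc ij] True by simp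
    also have "blk d Y (i-k) j = tz d Y m"
    proof -
      have "int (i-k) - int j = m" using True by (simp add: m_def of_nat_diff)
      thus ?thesis using tz_blk[OF Yt _ ij(2), of "i-k"] ij by simp
    qed
    finally show ?thesis using True ij unfolding m_def V_def by simp
  next
    case False
    have kp: "0 < k" using False by simp
    have "blk d (D*Y) i j = be * blk d Y (i+n-k) j" using DY_blk[OF Yc ij] False by simp
    also have "blk d Y (i+n-k) j = tz d Y (m + int n)"
    proof -
      have "int (i+n-k) - int j = m + int n" using False kn by (simp add: m_def of_nat_diff)
      moreover have "blk d Y (i+n-k) j = tz d Y (int (i+n-k) - int j)"
        by (rule tz_blk[OF Yt _ ij(2)]) (use False kn in simp)
      ultimately show ?thesis by (simp only:)
    qed
    finally have e: "blk d (D*Y) i j = be * tz d Y (m + int n)" .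
    show ?thesis
    proof (cases "- int n < m")
      case True
      have "al * tz d Y m = be * tz d Y (m + int n)"
        by (rule cnd_cond[OF Y kp True]) (use False in \<open>simp add: m_def\<close>)
      thus ?thesis using e True unfolding V_def m_def by simp
    next
      case False
      thus ?thesis using e unfolding V_def m_def by simp
    qed
  qed
  show "blk d (Y*D) i j = V Y (int i - int j - int k)"
  proof (cases "j + k < n")
    case True
    have "blk d (Y*D) i j = blk d Y i (j+k) * al" using YD_blk[OF Yc ij] True by simp
    also have "blk d Y i (j+k) = tz d Y m" using tz_blk[OF Yt ij(1) True] by (simp add: m_def diff_diff_eq)
    also have "tz d Y m * al = al * tz d Y m"
      by (rule A_com[OF cnd_tz[OF Y] al_A]) (use True ij in \<open>auto simp: m_def\<close>)
    finally show ?thesis using True ij unfolding m_def V_def by simp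
  next
    case False
    have kp: "0 < k" using False ij by simp
    have "blk d (Y*D) i j = blk d Y i (j+k-n) * be" using YD_blk[OF Yc ij] False by simp
    also have "blk d Y i (j+k-n) = tz d Y (m + int n)"
    proof -
      have "int i - int (j+k-n) = m + int n" using False kn by (simp add: m_def of_nat_diff)
      moreover have "blk d Y i (j+k-n) = tz d Y (int i - int (j+k-n))"
        by (rule tz_blk[OF Yt ij(1)]) (use False kn ij in simp)
      ultimately show ?thesis by (simp only:)
    qed
    also have "tz d Y (m + int n) * be = be * tz d Y (m + int n)"
      by (rule A_com[OF cnd_tz[OF Y] be_A[OF kp]]) (use False ij kn in \<open>auto simp: m_def\<close>)
    finally have e: "blk d (Y*D) i j = be * tz d Y (m + int n)" .
    show ?thesis
    proof (cases "- int n < m")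
      case True
      have "al * tz d Y m = be * tz d Y (m + int n)"
        by (rule cnd_cond[OF Y kp True]) (use False ij in \<open>simp add: m_def\<close>)
      thus ?thesis using e True unfolding V_def m_def by simp
    next
      case False
      thus ?thesis using e unfolding V_def m_def by simp
    qed
  qed
qed

lemma V_A:
  assumes Y: "cnd Y" and ij: "i < n" "j < n"
  shows "V Y (int i - int j - int k) \<in> A"
proof (cases "- int n < int i - int j - int k")
  case True
  thus ?thesis unfolding V_def using ij kn
    by (simp add: A_mult[OF al_A cnd_tz[OF Y]])
next
  case False
  hence kp: "0 < k" using ij by simp
  show ?thesis unfolding V_def using False ij kn
    by (simp add: A_mult[OF be_A[OF kp] cnd_tz[OF Y]])
qed

lemma DY_comm: assumes Y: "cnd Y" shows "D * Y = Y * D"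
proof -
  have c: "D * Y \<in> carrier_mat (n*d) (n*d)" "Y * D \<in> carrier_mat (n*d) (n*d)"
    using D_car cnd_car[OF Y] by auto
  show ?thesis by (rule blk_eqI[OF c]) (simp add: key[OF Y])
qed

lemma DY_cnd:
  assumes Y: "cnd Y" shows "cnd (D * Y)"
proof -
  note Yc = cnd_car[OF Y]
  have car: "D * Y \<in> carrier_mat (n*d) (n*d)" using D_car Yc by simp
  have toep: "block_toeplitz n d (D*Y)"
    unfolding block_toeplitz_def using car key(1)[OF Y] by auto
  have inA: "\<forall>i<n. \<forall>j<n. blk d (D*Y) i j \<in> A" using key(1)[OF Y] V_A[OF Y] by simp
  have cond: "al * tz d (D*Y) r = be * tz d (D*Y) (r + int n)" if kp: "0 < k" and r: "- int n < r" "r < 0" for r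
  proof -
    have "tz d (D*Y) r = blk d (D*Y) 0 (nat (-r))" using r by (simp add: tz_def)
    also have "\<dots> = V Y (r - int k)" using key(1)[OF Y npos, of "nat (-r)"] r by simp
    finally have e1: "tz d (D*Y) r = V Y (r - int k)" .
    have "tz d (D*Y) (r + int n) = blk d (D*Y) (nat (r + int n)) 0" using r by (simp add: tz_def)
    also have "\<dots> = V Y (r + int n - int k)" using key(1)[OF Y _ npos, of "nat (r + int n)"] r by simp
    also have "\<dots> = al * tz d Y (r + int n - int k)" using r kn by (simp add: V_def)
    finally have e2: "tz d (D*Y) (r + int n) = al * tz d Y (r + int n - int k)" .
    have alc: "al \<in> carrier_mat d d" and bec: "be \<in> carrier_mat d d"
      using A_car al_A be_A kp by auto
    have ab: "al * be = be * al" using A_com al_A be_A kp by auto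
    show ?thesis
    proof (cases "- int n < r - int k")
      case True
      define t where "t = tz d Y (r - int k)"
      define t' where "t' = tz d Y (r + int n - int k)"
      have tc: "t \<in> carrier_mat d d" "t' \<in> carrier_mat d d" unfolding t_def t'_def
        using A_car cnd_tz[OF Y] True r kn by auto
      have c: "al * t = be * t'" unfolding t_def t'_def
        using cnd_cond[OF Y kp True] r by (simp add: algebra_simps)
      have "al * (al * t) = al * (be * t')" by (simp add: c)
      also have "\<dots> = (al * be) * t'" using alc bec tc by simp
      also have "\<dots> = (be * al) * t'" by (simp add: ab)
      also have "\<dots> = be * (al * t')" using alc bec tc by simp
      finally show ?thesis using e1 e2 True unfolding V_def t_def t'_def by simp
    next
      case False
      define t' where "t' = tz d Y (r + int n - int k)"
      have tc: "t' \<in> carrier_mat d d" unfolding t'_def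
        using A_car cnd_tz[OF Y] r kn by auto
      have "al * (be * t') = (al * be) * t'" using alc bec tc by simp
      also have "\<dots> = (be * al) * t'" by (simp add: ab)
      also have "\<dots> = be * (al * t')" using alc bec tc by simp
      finally show ?thesis using e1 e2 False unfolding V_def t'_def by (simp add: algebra_simps)
    qed
  qed
  show ?thesis unfolding cnd_def toeplitz_in_def using toep inA cond by auto
qed


lemma tz_add: "M \<in> carrier_mat (n*d) (n*d) \<Longrightarrow> N \<in> carrier_mat (n*d) (n*d) \<Longrightarrow> - int n < r \<Longrightarrow> r < int n
  \<Longrightarrow> tz d (M + N) r = tz d M r + tz d N r"
  using npos by (auto simp: tz_def nat_less_iff)

lemma tz_smult: "M \<in> carrier_mat (n*d) (n*d) \<Longrightarrow> - int n < r \<Longrightarrow> r < int n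
  \<Longrightarrow> tz d (c \<cdot>\<^sub>m M) r = c \<cdot>\<^sub>m tz d M r"
  using npos by (auto simp: tz_def nat_less_iff)

lemma cnd_add:
  assumes M: "cnd M" and N: "cnd N" shows "cnd (M + N)"
proof -
  note Mc = cnd_car[OF M] and Nc = cnd_car[OF N]
  have car: "M + N \<in> carrier_mat (n*d) (n*d)" using Mc Nc by simp
  have toep: "block_toeplitz n d (M+N)" unfolding block_toeplitz_def
  proof (intro conjI allI impI)
    fix i j i' j' assume h: "i < n" "j < n" "i' < n" "j' < n" "int i - int j = int i' - int j'"
    show "blk d (M + N) i j = blk d (M + N) i' j'"
      using blk_add[OF Mc Nc] h toepD[OF cnd_toep[OF M] h] toepD[OF cnd_toep[OF N] h] by simp
  qed (rule car)
  have inA: "\<forall>i<n. \<forall>j<n. blk d (M+N) i j \<in> A"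
    using M N Mc Nc A_add by (auto simp: cnd_def toeplitz_in_def)
  have cond: "al * tz d (M+N) r = be * tz d (M+N) (r + int n)" if kp: "0 < k" and r: "- int n < r" "r < 0" for r
  proof -
    have c: "tz d M r \<in> carrier_mat d d" "tz d N r \<in> carrier_mat d d"
      "tz d M (r + int n) \<in> carrier_mat d d" "tz d N (r + int n) \<in> carrier_mat d d"
      using A_car cnd_tz[OF M] cnd_tz[OF N] r by auto
    have alc: "al \<in> carrier_mat d d" and bec: "be \<in> carrier_mat d d"
      using A_car al_A be_A kp by auto
    have "al * tz d (M+N) r = al * tz d M r + al * tz d N r"
      using tz_add[OF Mc Nc] r c alc by (simp add: mult_add_distrib_mat)
    also have "\<dots> = be * tz d M (r + int n) + be * tz d N (r + int n)"
      using cnd_cond[OF M kp r] cnd_cond[OF N kp r] by simp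
    also have "\<dots> = be * tz d (M+N) (r + int n)"
      using tz_add[OF Mc Nc] r c bec by (simp add: mult_add_distrib_mat)
    finally show ?thesis .
  qed
  show ?thesis unfolding cnd_def toeplitz_in_def using toep inA cond by auto
qed

lemma cnd_smult:
  assumes M: "cnd M" shows "cnd (c \<cdot>\<^sub>m M)"
proof -
  note Mc = cnd_car[OF M]
  have car: "c \<cdot>\<^sub>m M \<in> carrier_mat (n*d) (n*d)" using Mc by simp
  have toep: "block_toeplitz n d (c \<cdot>\<^sub>m M)" unfolding block_toeplitz_def
  proof (intro conjI allI impI)
    fix i j i' j' assume h: "i < n" "j < n" "i' < n" "j' < n" "int i - int j = int i' - int j'"
    show "blk d (c \<cdot>\<^sub>m M) i j = blk d (c \<cdot>\<^sub>m M) i' j'"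
      using blk_smult[OF Mc] h toepD[OF cnd_toep[OF M] h] by simp
  qed (rule car)
  have inA: "\<forall>i<n. \<forall>j<n. blk d (c \<cdot>\<^sub>m M) i j \<in> A"
    using M Mc A_smult by (auto simp: cnd_def toeplitz_in_def)
  have cond: "al * tz d (c \<cdot>\<^sub>m M) r = be * tz d (c \<cdot>\<^sub>m M) (r + int n)" if kp: "0 < k" and r: "- int n < r" "r < 0" for r
  proof -
    have c: "tz d M r \<in> carrier_mat d d" "tz d M (r + int n) \<in> carrier_mat d d"
      using A_car cnd_tz[OF M] r by auto
    have alc: "al \<in> carrier_mat d d" and bec: "be \<in> carrier_mat d d"
      using A_car al_A be_A kp by auto
    have "al * tz d (c \<cdot>\<^sub>m M) r = c \<cdot>\<^sub>m (al * tz d M r)"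
      using tz_smult[OF Mc] r c alc by (simp add: mult_smult_distrib)
    also have "\<dots> = c \<cdot>\<^sub>m (be * tz d M (r + int n))"
      using cnd_cond[OF M kp r] by simp
    also have "\<dots> = be * tz d (c \<cdot>\<^sub>m M) (r + int n)"
      using tz_smult[OF Mc] r c bec by (simp add: mult_smult_distrib)
    finally show ?thesis .
  qed
  show ?thesis unfolding cnd_def toeplitz_in_def using toep inA cond by auto
qed

lemma cnd_D: "cnd D"
proof -
  have cond: "al * tz d D r = be * tz d D (r + int n)" if kp: "0 < k" and r: "- int n < r" "r < 0" for r
  proof -
    have alc: "al \<in> carrier_mat d d" and bec: "be \<in> carrier_mat d d"
      using A_car al_A be_A kp by auto
    have e1: "tz d D r = (if r = int k - int n then be else 0\<^sub>m d d)"
      using r D_blk[OF npos, of "nat (-r)"] kp by (auto simp: tz_def)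
    have e2: "tz d D (r + int n) = (if r = int k - int n then al else 0\<^sub>m d d)"
      using r D_blk[OF _ npos, of "nat (r + int n)"] kp kn by (auto simp: tz_def)
    show ?thesis using e1 e2 alc bec A_com[OF al_A be_A[OF kp]] by auto
  qed
  show ?thesis unfolding cnd_def using D_in cond by auto
qed

lemma cnd_of_rel:
  assumes X: "X \<in> toeplitz_in n d A" and R: "block_toeplitz n d (D * X)"
  shows "cnd X"
proof -
  have Xt: "block_toeplitz n d X" using X by (simp add: toeplitz_in_def)
  hence Xc: "X \<in> carrier_mat (n*d) (n*d)" by (simp add: block_toeplitz_def)
  have cond: "al * tz d X r = be * tz d X (r + int n)" if kp: "0 < k" and r: "- int n < r" "r < 0" for r
  proof -
    define q where "q = nat (-r)"
    have q: "0 < q" "q < n" using r by (auto simp: q_def)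
    have E1: "blk d (D*X) k q = blk d (D*X) (k-1) (q-1)"
      by (rule toepD[OF R kn q(2)]) (use kp q kn in auto)
    have E2: "blk d (D*X) k q = al * blk d X 0 q" using DY_blk[OF Xc kn q(2)] by simp
    have E3: "blk d (D*X) (k-1) (q-1) = be * blk d X (n-1) (q-1)"
    proof -
      have "k - 1 < n" "q - 1 < n" "\<not> k \<le> k - 1" "k - 1 + n - k = n - 1" using kp kn q by auto
      thus ?thesis using DY_blk[OF Xc, of "k-1" "q-1"] by simp
    qed
    have E4: "blk d X 0 q = tz d X r" using r by (simp add: tz_def q_def)
    have E5: "blk d X (n-1) (q-1) = tz d X (r + int n)"
    proof -
      have "int (n-1) - int (q-1) = r + int n" using q r by (simp add: q_def of_nat_diff)
      moreover have "blk d X (n-1) (q-1) = tz d X (int (n-1) - int (q-1))"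
        by (rule tz_blk[OF Xt]) (use q in auto)
      ultimately show ?thesis by (simp only:)
    qed
    have "al * tz d X r = blk d (D*X) k q" by (simp only: E2 E4)
    also have "\<dots> = be * tz d X (r + int n)" by (simp only: E1 E3 E5)
    finally show ?thesis .
  qed
  show ?thesis unfolding cnd_def using X cond by auto
qed

end

inductive_set genU :: "complex mat set \<Rightarrow> complex mat \<Rightarrow> complex mat set" for B D where
  base: "X \<in> B \<Longrightarrow> X \<in> genU B D"
| dgen: "D \<in> genU B D"
| dmul: "M \<in> genU B D \<Longrightarrow> D * M \<in> genU B D"
| add: "M \<in> genU B D \<Longrightarrow> N \<in> genU B D \<Longrightarrow> M + N \<in> genU B D"
| smul: "M \<in> genU B D \<Longrightarrow> c \<cdot>\<^sub>m M \<in> genU B D"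

theorem corollary4p4:
  fixes n d k :: nat and A B :: "complex mat set" and D :: "complex mat"
  assumes "max_comm_subalg d A"
    and "is_subalg (n * d) B" and "is_commutative B"
    and "B \<subseteq> toeplitz_in n d A"
    and "D \<in> toeplitz_in n d A" and "cyclic_diag n d k D"
    and "\<forall>X\<in>B. toep_rel n d D X"
  shows "\<forall>M \<in> gen_alg (n * d) (B \<union> {D}). block_toeplitz n d M"
proof -
  interpret tzs n d k A D
    using assms(1,5,6) by unfold_locales (auto simp: max_comm_subalg_def)
  have Bsub: "is_subalg (n*d) B" by fact
  have cB: "cnd X" if "X \<in> B" for X
    using cnd_of_rel[of X] assms(4,7) that by (auto simp: toep_rel_def)
  have Ucnd: "cnd M" if "M \<in> genU B D" for M
    using that by induction (auto intro: cB cnd_D DY_cnd cnd_add cnd_smult)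
  have Ucar: "M \<in> carrier_mat (n*d) (n*d)" if "M \<in> genU B D" for M
    using cnd_car[OF Ucnd[OF that]] .
  have Dc: "D \<in> carrier_mat (n*d) (n*d)" by (rule D_car)
  have left: "X * M \<in> genU B D" if X: "X \<in> B" and M: "M \<in> genU B D" for X M
    using M
  proof induction
    case (base X')
    thus ?case using X Bsub by (auto simp: is_subalg_def intro: genU.base)
  next
    case dgen
    have "X * D = D * X" using DY_comm[OF cB[OF X]] by simp
    thus ?case by (simp add: genU.dmul genU.base X)
  next
    case (dmul M)
    have Xc: "X \<in> carrier_mat (n*d) (n*d)" using Ucar genU.base X by blast
    have Mc: "M \<in> carrier_mat (n*d) (n*d)" using Ucar dmul by blast
    have "X * (D * M) = (X * D) * M" using Xc Dc Mc by simp
    also have "\<dots> = (D * X) * M" using DY_comm[OF cB[OF X]] by simp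
    also have "\<dots> = D * (X * M)" using Xc Dc Mc by simp
    finally show ?case using dmul genU.dmul by simp
  next
    case (add M N)
    have Xc: "X \<in> carrier_mat (n*d) (n*d)" using Ucar genU.base X by blast
    have "X * (M + N) = X * M + X * N"
      by (rule mult_add_distrib_mat[OF Xc Ucar[OF add(1)] Ucar[OF add(2)]])
    thus ?case using add genU.add by simp
  next
    case (smul M c)
    have Xc: "X \<in> carrier_mat (n*d) (n*d)" using Ucar genU.base X by blast
    have "X * (c \<cdot>\<^sub>m M) = c \<cdot>\<^sub>m (X * M)"
      by (rule mult_smult_distrib[OF Xc Ucar[OF smul(1)]])
    thus ?case using smul genU.smul by simp
  qed
  have mult: "M * N \<in> genU B D" if M: "M \<in> genU B D" and N: "N \<in> genU B D" for M N
    using M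
  proof induction
    case (base X)
    thus ?case using left N by blast
  next
    case dgen
    thus ?case using N genU.dmul by blast
  next
    case (dmul M)
    have "(D * M) * N = D * (M * N)"
      by (rule assoc_mult_mat[OF Dc Ucar[OF dmul(1)] Ucar[OF N]])
    thus ?case using dmul genU.dmul by simp
  next
    case (add M M')
    have "(M + M') * N = M * N + M' * N"
      by (rule add_mult_distrib_mat[OF Ucar[OF add(1)] Ucar[OF add(2)] Ucar[OF N]])
    thus ?case using add genU.add by simp
  next
    case (smul M c)
    have "(c \<cdot>\<^sub>m M) * N = c \<cdot>\<^sub>m (M * N)"
      by (rule mult_smult_assoc_mat[OF Ucar[OF smul(1)] Ucar[OF N]])
    thus ?case using smul genU.smul by simp
  qed
  have zero: "0\<^sub>m (n*d) (n*d) \<in> genU B D" using Bsub by (auto simp: is_subalg_def intro: genU.base)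
  have sub: "is_subalg (n*d) (genU B D)"
    unfolding is_subalg_def using Ucar zero mult genU.add genU.smul by blast
  have incl: "B \<union> {D} \<subseteq> genU B D" using genU.base genU.dgen by blast
  show ?thesis
  proof
    fix M assume "M \<in> gen_alg (n * d) (B \<union> {D})"
    hence "M \<in> genU B D" using sub incl unfolding gen_alg_def by blast
    thus "block_toeplitz n d M" using cnd_toep Ucnd by blast
  qed
qed

end
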